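(* Let $p$ be a prime, let $n,m$ be positive integers, let $F:\mathbb{F}_{p^n}\to\mathbb{F}_{p^m}$ be a function and let $\theta>0$. Let $G_F=\{(x,F(x)) : x\in\mathbb{F}_{p^n}\}\subseteq H=\mathbb{F}_{p^n}\times\mathbb{F}_{p^m}$ (additive group). Then $G_F$ is a partial geometric difference set in $H$ with parameters $(p^{n+m},p^n;\alpha,\beta)$ for some constants $\alpha,\beta$ with $\beta-\alpha=\theta$ if and only if $|\widehat{F_b}(a)|\in\{0,\sqrt{\theta}\}$ for all $b\in\mathbb{F}_{p^m}^*$ and all $a\in\mathbb{F}_{p^n}$. Moreover, in this case $\theta=p^{n+s}$ for some integer $0\le s\le n$, and $\alpha=p^{2n-m}-p^{n+s-m}$, $\beta=p^{n+s}+p^{2n-m}-p^{n+s-m}$.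
   Context: $\zeta_p=e^{2\pi i/p}$ and $Tr_n(z)=\sum_{i=0}^{n-1}z^{p^i}$ is the absolute trace of $\mathbb{F}_{p^n}$ (similarly $Tr_m$). For $b\in\mathbb{F}_{p^m}^*$ the component function is $F_b(x)=Tr_m(bF(x))$, and its Walsh transform is $\widehat{F_b}(a)=\sum_{x\in\mathbb{F}_{p^n}}\zeta_p^{F_b(x)-Tr_n(ax)}$ for $a\in\mathbb{F}_{p^n}$. Partial geometric difference set: let $G$ be an abelian group of order $v$ (written additively) and $S\subseteq G$ with $|S|=k$, where $v>k>2$. For $g\in G$ let $\delta(g)=|\{(s,t)\in S\times S: g=s-t\}|$. $S$ is a partial geometric difference set (PGDS) with parameters $(v,k;\alpha,\beta)$ if for every $x\in G$, $\sum_{y\in S}\delta(x-y)=\alpha$ when $x\notin S$ and $=\beta$ when $x\in S$. *)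

theory Defs
  imports "HOL-Analysis.Analysis" "HOL-Library.Product_Plus"
begin

definition zeta :: "nat \<Rightarrow> complex" where
  "zeta p = exp (2 * pi * \<i> / of_nat p)"

definition abs_trace :: "nat \<Rightarrow> nat \<Rightarrow> 'a::field \<Rightarrow> 'a" where
  "abs_trace p n z = (\<Sum>i<n. z ^ (p ^ i))"

definition fp_val :: "nat \<Rightarrow> 'a::field \<Rightarrow> nat" where
  "fp_val p t = (THE k. k < p \<and> of_nat k = t)"

(* Walsh transform of the component function F_b(x) = Tr_m(b F(x)) at a *)
definition walsh ::
  "nat \<Rightarrow> nat \<Rightarrow> nat \<Rightarrow> ('a::{field,finite} \<Rightarrow> 'b::{field,finite}) \<Rightarrow> 'b \<Rightarrow> 'a \<Rightarrow> complex" where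
  "walsh p n m F b a =
     (\<Sum>x\<in>(UNIV::'a set).
        zeta p powi (int (fp_val p (abs_trace p m (b * F x))) - int (fp_val p (abs_trace p n (a * x)))))"

definition delta :: "'g::ab_group_add set \<Rightarrow> 'g \<Rightarrow> nat" where
  "delta S g = card {(s, t). s \<in> S \<and> t \<in> S \<and> g = s - t}"

definition pgds :: "'g::ab_group_add set \<Rightarrow> nat \<Rightarrow> nat \<Rightarrow> nat \<Rightarrow> nat \<Rightarrow> bool" where
  "pgds S v k \<alpha> \<beta> \<longleftrightarrow>
     finite (UNIV :: 'g set) \<and> card (UNIV :: 'g set) = v \<and> card S = k \<and> v > k \<and> k > 2 \<and>
     (\<forall>x. (x \<notin> S \<longrightarrow> (\<Sum>y\<in>S. delta S (x - y)) = \<alpha>) \<and>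
          (x \<in> S \<longrightarrow> (\<Sum>y\<in>S. delta S (x - y)) = \<beta>))"

definition graph_set :: "('a \<Rightarrow> 'b) \<Rightarrow> ('a \<times> 'b) set" where
  "graph_set F = {(x, F x) | x. True}"

end

theory Submission
  imports Defs "HOL-Computational_Algebra.Computational_Algebra" "HOL-Number_Theory.Cong"
begin


lemma ff_card_zero: "(of_nat CARD('c::{field,finite}) :: 'c) = 0"
proof -
  have "(\<Sum>x\<in>(UNIV::'c set). x + 1) = (\<Sum>x\<in>UNIV. x)"
    by (rule sum.reindex_bij_witness[of _ "\<lambda>y. y - 1" "\<lambda>y. y + 1"]) auto
  thus ?thesis by (simp add: sum.distrib)
qed

lemma ff_char:
  assumes "prime p" "CARD('c::{field,finite}) = p ^ n"
  shows "CHAR('c) = p"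
proof -
  have pos: "CHAR('c) > 0" by (rule finite_imp_CHAR_pos) simp
  have pr: "prime CHAR('c)" by (rule prime_CHAR_semidom[OF pos])
  have "CHAR('c) dvd p ^ n" using ff_card_zero[where 'c='c] of_nat_eq_0_iff_char_dvd assms by metis
  hence "CHAR('c) dvd p" using pr prime_dvd_power by blast
  thus ?thesis using pr assms(1) primes_dvd_imp_eq by blast
qed

lemma ff_power_card:
  fixes x :: "'c::{field,finite}"
  shows "x ^ CARD('c) = x"
proof (cases "x = 0")
  case False
  have "x * (\<Prod>y\<in>UNIV-{0}. x * y) = x * x ^ (card (UNIV :: 'c set) - 1) * \<Prod>(UNIV-{0})"
    by (simp add: prod.distrib mult_ac)
  also have "x * x ^ (card (UNIV :: 'c set) - 1) = x ^ Suc (card (UNIV :: 'c set) - 1)"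
    by (subst power_Suc) auto
  also have "Suc (card (UNIV :: 'c set) - 1) = card (UNIV :: 'c set)"
    using finite_UNIV_card_ge_0[where ?'a = 'c] by simp
  also have "(\<Prod>y\<in>UNIV-{0}. x * y) = (\<Prod>y\<in>UNIV-{0}. y)"
    by (rule prod.reindex_bij_witness[of _ "\<lambda>y. y / x" "\<lambda>y. x * y"]) (use False in auto)
  finally show ?thesis
    by simp
qed (use finite_UNIV_card_ge_0[where ?'a = 'c] in auto)

lemma ff_of_nat_inj:
  assumes "prime p" "CARD('c::{field,finite}) = p ^ n" "i < p" "j < p"
    "(of_nat i :: 'c) = of_nat j"
  shows "i = j"
proof -
  have "[i = j] (mod p)" using assms ff_char[OF assms(1,2)] of_nat_eq_iff_cong_CHAR by metis
  thus ?thesis using assms(3,4) by (simp add: cong_def)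
qed

lemma ff_frob_of_nat:
  assumes "prime p" "CARD('c::{field,finite}) = p ^ n"
  shows "(of_nat k :: 'c) ^ p = of_nat k"
proof (induction k)
  case 0 then show ?case using assms prime_gt_0_nat by auto
next
  case (Suc k)
  have "(of_nat (Suc k) :: 'c) ^ p = (of_nat k + 1) ^ p" by (simp add: add.commute)
  also have "\<dots> = of_nat k ^ p + 1 ^ p"
    by (rule freshmans_dream) (use ff_char[OF assms] assms in auto)
  finally show ?case using Suc by simp
qed

lemma ff_prime_subfield:
  assumes "prime p" "CARD('c::{field,finite}) = p ^ n" "(t::'c) ^ p = t"
  shows "\<exists>k<p. t = of_nat k"
proof -
  have p1: "p > 1" using assms(1) prime_gt_1_nat by blast
  define q :: "'c poly" where "q = monom 1 p - [:0,1:]"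
  have cq: "coeff q p = 1" using p1 by (simp add: q_def coeff_monom coeff_pCons split: nat.split)
  hence qnz: "q \<noteq> 0" by auto
  have dq: "degree q \<le> p"
  proof -
    have "degree q \<le> max (degree (monom (1::'c) p)) (degree [:0,1::'c:])"
      unfolding q_def by (rule degree_diff_le_max)
    thus ?thesis using p1 by (simp add: degree_monom_eq)
  qed
  have pq: "poly q x = x ^ p - x" for x by (simp add: q_def poly_monom)
  define R where "R = {x. poly q x = 0}"
  have finR: "finite R" unfolding R_def using poly_roots_finite[OF qnz] .
  have cR: "card R \<le> p" unfolding R_def using card_poly_roots_bound[OF qnz] dq by linarith
  define A where "A = (of_nat ` {..<p} :: 'c set)"
  have injA: "inj_on (of_nat :: nat \<Rightarrow> 'c) {..<p}"
    by (intro inj_onI) (use ff_of_nat_inj[OF assms(1,2)] in auto)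
  have cA: "card A = p" unfolding A_def using card_image[OF injA] by simp
  have AR: "A \<subseteq> R" unfolding A_def R_def using ff_frob_of_nat[OF assms(1,2)] by (auto simp: pq)
  have "A = R" by (rule card_seteq[OF finR AR]) (use cA cR in simp)
  moreover have "t \<in> R" using assms(3) by (simp add: R_def pq)
  ultimately show ?thesis unfolding A_def by auto
qed

lemma ff_trace_add:
  assumes "prime p" "CARD('c::{field,finite}) = p ^ n"
  shows "abs_trace p n ((x::'c) + y) = abs_trace p n x + abs_trace p n y"
proof -
  have "(x+y)^(p^i) = x^(p^i) + y^(p^i)" for i
    by (rule freshmans_dream') (use ff_char[OF assms] assms in auto)
  thus ?thesis by (simp add: abs_trace_def sum.distrib)
qed

lemma ff_trace_frob:
  assumes "prime p" "CARD('c::{field,finite}) = p ^ n"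
  shows "abs_trace p n (x::'c) ^ p = abs_trace p n x"
proof -
  have "abs_trace p n x ^ p = (\<Sum>i<n. (x ^ (p ^ i)) ^ p)"
    unfolding abs_trace_def
    by (rule freshmans_dream_sum) (use ff_char[OF assms] assms in auto)
  also have "\<dots> = (\<Sum>i<n. x ^ (p ^ Suc i))"
    by (simp add: power_mult[symmetric] mult.commute)
  also have "\<dots> = (\<Sum>i<Suc n. x ^ (p ^ i)) - x"
    by (subst sum.lessThan_Suc_shift) simp
  also have "\<dots> = (\<Sum>i<n. x ^ (p ^ i)) + x ^ (p ^ n) - x"
    by simp
  also have "x ^ (p ^ n) = x" using ff_power_card[of x] assms(2) by simp
  finally show ?thesis by (simp add: abs_trace_def)
qed

lemma ff_trace_val:
  assumes "prime p" "CARD('c::{field,finite}) = p ^ n"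
  shows "\<exists>k<p. abs_trace p n (x::'c) = of_nat k"
  using ff_prime_subfield[OF assms ff_trace_frob[OF assms]] .

lemma ff_fp_val:
  assumes "prime p" "CARD('c::{field,finite}) = p ^ n" "k < p"
  shows "fp_val p (of_nat k :: 'c) = k"
  unfolding fp_val_def
  by (rule the_equality) (use assms ff_of_nat_inj[OF assms(1,2)] in auto)

lemma ff_trace_nontriv:
  assumes "prime p" "CARD('c::{field,finite}) = p ^ n" "n > 0"
  shows "\<exists>w::'c. abs_trace p n w \<noteq> 0"
proof (rule ccontr)
  assume H: "\<not> ?thesis"
  have p1: "p > 1" using assms(1) prime_gt_1_nat by blast
  define r :: "'c poly" where "r = (\<Sum>i<n. monom 1 (p ^ i))"
  have pr: "poly r x = abs_trace p n x" for x
    by (simp add: r_def abs_trace_def poly_sum poly_monom)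
  have "coeff r (p ^ (n - 1)) = (\<Sum>i<n. if p ^ i = p ^ (n - 1) then 1 else 0)"
    by (simp add: r_def coeff_sum coeff_monom)
  also have "\<dots> = (\<Sum>i<n. if i = n - 1 then 1 else 0)"
    using p1 by (intro sum.cong refl) (metis power_inject_exp)
  also have "\<dots> = 1" using assms(3) by simp
  finally have "r \<noteq> 0" by auto
  have dr: "degree r \<le> p ^ (n - 1)"
    unfolding r_def
    by (rule degree_sum_le) (use p1 in \<open>auto intro: order.trans[OF degree_monom_le] simp: power_increasing\<close>)
  have "card {x. poly r x = 0} \<le> degree r" by (rule card_poly_roots_bound) fact
  moreover have "{x. poly r x = 0} = (UNIV :: 'c set)" using H pr by auto
  moreover have "p ^ (n - 1) < p ^ n" using p1 assms(3) by (simp add: power_strict_increasing)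
  ultimately show False using dr assms(2) by (metis card_UNIV_def le_trans not_le)
qed



definition chr :: "nat \<Rightarrow> nat \<Rightarrow> 'c::field \<Rightarrow> complex" where
  "chr p n z = zeta p ^ fp_val p (abs_trace p n z)"

definition addchar :: "('c::field \<Rightarrow> complex) \<Rightarrow> bool" where
  "addchar \<psi> \<longleftrightarrow> (\<forall>x y. \<psi> (x + y) = \<psi> x * \<psi> y) \<and> (\<forall>x. cmod (\<psi> x) = 1) \<and> (\<exists>w. \<psi> w \<noteq> 1)"

lemma zeta_cis: "zeta p = cis (2 * pi / real p)"
  unfolding zeta_def cis_conv_exp by (simp add: field_simps)

lemma zeta_pow: "zeta p ^ k = cis (real k * (2 * pi / real p))"
  by (simp only: zeta_cis Complex.DeMoivre)

lemma norm_zeta_pow [simp]: "cmod (zeta p ^ k) = 1"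
  by (simp add: zeta_pow)

lemma zeta_pow_p: "p > 0 \<Longrightarrow> zeta p ^ p = 1"
  by (simp add: zeta_pow)

lemma zeta_pow_mod: "p > 0 \<Longrightarrow> zeta p ^ (k mod p) = zeta p ^ k"
proof -
  assume "p > 0"
  have "zeta p ^ k = zeta p ^ (p * (k div p) + k mod p)" by simp
  also have "\<dots> = (zeta p ^ p) ^ (k div p) * zeta p ^ (k mod p)" by (simp only: power_add power_mult)
  finally show ?thesis using zeta_pow_p[OF \<open>p > 0\<close>] by simp
qed

lemma zeta_pow_ne1:
  assumes "0 < k" "k < p"
  shows "zeta p ^ k \<noteq> 1"
proof
  assume "zeta p ^ k = 1"
  hence "exp (\<i> * complex_of_real (real k * (2 * pi / real p))) = 1"
    by (simp add: zeta_pow cis_conv_exp)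
  then obtain j :: int where j: "real k * (2 * pi / real p) = of_int (2 * j) * pi"
    by (auto simp: exp_eq_1)
  have "real k = real p * of_int j" using j assms by (simp add: field_simps)
  hence "real_of_int (int k) = real_of_int (int p * j)" by simp
  hence kj: "int k = int p * j" by (simp only: of_int_eq_iff)
  show False
  proof (cases "j \<ge> 1")
    case True
    have "int p * 1 \<le> int p * j" by (rule mult_left_mono) (use True in simp_all)
    moreover have "int k < int p" using assms by simp
    ultimately show False using kj by linarith
  next
    case False
    hence "int p * j \<le> 0" by (simp add: mult_nonneg_nonpos)
    thus False using kj assms by simp
  qed
qed

lemma chr_addchar:
  assumes "prime p" "CARD('c::{field,finite}) = p ^ n" "n > 0"
  shows "addchar (chr p n :: 'c \<Rightarrow> complex)"
proof -
  have p0: "p > 0" using assms(1) prime_gt_0_nat by blast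
  have fpv: "\<exists>k<p. abs_trace p n z = of_nat k \<and> fp_val p (abs_trace p n z) = k" for z :: 'c
  proof -
    obtain k where "k < p" "abs_trace p n z = of_nat k" using ff_trace_val[OF assms(1,2), of z] by blast
    thus ?thesis using ff_fp_val[OF assms(1,2), of k] by auto
  qed
  have "chr p n (x + y) = chr p n x * chr p n y" for x y :: 'c
  proof -
    obtain i where i: "i < p" "abs_trace p n x = of_nat i" "fp_val p (abs_trace p n x) = i"
      using fpv by blast
    obtain j where j: "j < p" "abs_trace p n y = of_nat j" "fp_val p (abs_trace p n y) = j"
      using fpv by blast
    have "abs_trace p n (x + y) = of_nat (i + j)"
      using ff_trace_add[OF assms(1,2)] i j by simp
    also have "\<dots> = (of_nat ((i + j) mod p) :: 'c)"
      unfolding of_nat_eq_iff_cong_CHAR ff_char[OF assms(1,2)] cong_def by simp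
    finally have "fp_val p (abs_trace p n (x + y)) = (i + j) mod p"
      using ff_fp_val[OF assms(1,2)] p0 by simp
    thus ?thesis unfolding chr_def using i j zeta_pow_mod[OF p0] by (simp add: power_add)
  qed
  moreover have "cmod (chr p n x) = 1" for x :: 'c by (simp add: chr_def)
  moreover have "\<exists>w::'c. chr p n w \<noteq> (1::complex)"
  proof -
    obtain w :: 'c where w: "abs_trace p n w \<noteq> 0" using ff_trace_nontriv[OF assms] by blast
    obtain k where k: "k < p" "abs_trace p n w = of_nat k" "fp_val p (abs_trace p n w) = k"
      using fpv by blast
    have "k > 0" using w k by (cases k) auto
    hence "chr p n w \<noteq> 1" unfolding chr_def using k(3) zeta_pow_ne1[OF _ k(1)] by simp
    thus ?thesis by blast
  qed
  ultimately show ?thesis unfolding addchar_def by blast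
qed

lemma addchar_add: "addchar \<psi> \<Longrightarrow> \<psi> (x + y) = \<psi> x * \<psi> y"
  unfolding addchar_def by blast

lemma addchar_norm: "addchar \<psi> \<Longrightarrow> cmod (\<psi> x) = 1"
  unfolding addchar_def by blast

lemma addchar_0: "addchar \<psi> \<Longrightarrow> \<psi> 0 = 1"
proof -
  assume a: "addchar \<psi>"
  have "\<psi> 0 = \<psi> 0 * \<psi> 0" using addchar_add[OF a, of 0 0] by simp
  moreover have "\<psi> 0 \<noteq> 0" using addchar_norm[OF a, of 0] by auto
  ultimately show ?thesis by simp
qed

lemma addchar_inv: "addchar \<psi> \<Longrightarrow> \<psi> (- x) * \<psi> x = 1"
  using addchar_add[of \<psi> "-x" x] addchar_0[of \<psi>] by simp

lemma addchar_cnj: "addchar \<psi> \<Longrightarrow> cnj (\<psi> x) * \<psi> x = 1"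
proof -
  assume a: "addchar \<psi>"
  have "\<psi> x * cnj (\<psi> x) = complex_of_real ((cmod (\<psi> x))\<^sup>2)"
    by (rule complex_norm_square[symmetric])
  thus ?thesis using addchar_norm[OF a] by (simp add: mult.commute)
qed

lemma addchar_neg: "addchar \<psi> \<Longrightarrow> \<psi> (- x) = cnj (\<psi> x)"
proof -
  assume a: "addchar \<psi>"
  have "\<psi> x \<noteq> 0" using addchar_norm[OF a, of x] by auto
  thus ?thesis using addchar_inv[OF a, of x] addchar_cnj[OF a, of x]
    by (metis mult_cancel_right)
qed

lemma addchar_diff: "addchar \<psi> \<Longrightarrow> \<psi> (x - y) = \<psi> x * cnj (\<psi> y)"
  using addchar_add[of \<psi> x "-y"] addchar_neg[of \<psi> y] by simp

lemma addchar_sum0: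
  fixes \<psi> :: "'c::{field,finite} \<Rightarrow> complex"
  assumes "addchar \<psi>"
  shows "(\<Sum>z\<in>UNIV. \<psi> z) = 0"
proof -
  obtain w where w: "\<psi> w \<noteq> 1" using assms unfolding addchar_def by blast
  have "\<psi> w * (\<Sum>z\<in>UNIV. \<psi> z) = (\<Sum>z\<in>UNIV. \<psi> (w + z))"
    by (simp add: sum_distrib_left addchar_add[OF assms])
  also have "\<dots> = (\<Sum>z\<in>UNIV. \<psi> z)"
    by (rule sum.reindex_bij_witness[of _ "\<lambda>y. y - w" "\<lambda>y. w + y"]) auto
  finally have "(\<psi> w - 1) * (\<Sum>z\<in>UNIV. \<psi> z) = 0" by (simp add: algebra_simps)
  thus ?thesis using w by simp
qed

lemma addchar_orth:
  fixes \<psi> :: "'c::{field,finite} \<Rightarrow> complex"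
  assumes "addchar \<psi>"
  shows "(\<Sum>z\<in>UNIV. \<psi> (c * z)) = (if c = 0 then of_nat CARD('c) else 0)"
proof (cases "c = 0")
  case True thus ?thesis using addchar_0[OF assms] by simp
next
  case False
  have "(\<Sum>z\<in>UNIV. \<psi> (c * z)) = (\<Sum>z\<in>UNIV. \<psi> z)"
    by (rule sum.reindex_bij_witness[of _ "\<lambda>y. y / c" "\<lambda>y. c * y"]) (use False in auto)
  thus ?thesis using addchar_sum0[OF assms] False by simp
qed



lemma sum_UNIV_prod:
  "(\<Sum>g\<in>(UNIV::('a::finite \<times> 'b::finite) set). f g) = (\<Sum>u\<in>UNIV. \<Sum>w\<in>UNIV. f (u, w))"
  unfolding sum.cartesian_product by simp

lemma card_pairs:
  "card {(y::'a::finite, z::'b::finite). \<Phi> y z} = (\<Sum>y\<in>UNIV. \<Sum>z\<in>UNIV. if \<Phi> y z then 1 else 0)"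
proof -
  have "card {(y, z). \<Phi> y z} = card {u\<in>(UNIV::('a\<times>'b) set). \<Phi> (fst u) (snd u)}"
    by (rule arg_cong[where f=card]) auto
  also have "\<dots> = (\<Sum>u\<in>(UNIV::('a\<times>'b) set). if \<Phi> (fst u) (snd u) then 1 else 0)"
    by (subst card_eq_sum, rule sum.inter_filter) simp
  also have "\<dots> = (\<Sum>y\<in>UNIV. \<Sum>z\<in>UNIV. if \<Phi> y z then 1 else 0)"
    by (simp add: sum_UNIV_prod)
  finally show ?thesis .
qed

definition chi :: "('a::field \<Rightarrow> complex) \<Rightarrow> ('b::field \<Rightarrow> complex) \<Rightarrow> 'a \<times> 'b \<Rightarrow> 'a \<times> 'b \<Rightarrow> complex" where
  "chi \<psi>A \<psi>B k g = \<psi>A (fst k * fst g) * \<psi>B (snd k * snd g)"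

definition Shat where
  "Shat \<psi>A \<psi>B F k = (\<Sum>x\<in>UNIV. chi \<psi>A \<psi>B k (x, F x))"

definition Ncnt :: "('a::field \<Rightarrow> 'b::field) \<Rightarrow> 'a \<times> 'b \<Rightarrow> nat" where
  "Ncnt F g = (\<Sum>y\<in>graph_set F. delta (graph_set F) (g - y))"

context
  fixes \<psi>A :: "'a::{field,finite} \<Rightarrow> complex" and \<psi>B :: "'b::{field,finite} \<Rightarrow> complex"
  assumes A: "addchar \<psi>A" and B: "addchar \<psi>B"
begin

lemma chi_add: "chi \<psi>A \<psi>B k (g + h) = chi \<psi>A \<psi>B k g * chi \<psi>A \<psi>B k h"
  by (simp add: chi_def distrib_left addchar_add[OF A] addchar_add[OF B])

lemma chi_diff: "chi \<psi>A \<psi>B k (g - h) = chi \<psi>A \<psi>B k g * cnj (chi \<psi>A \<psi>B k h)"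
  by (simp add: chi_def right_diff_distrib addchar_diff[OF A] addchar_diff[OF B])

lemma chi_neg: "chi \<psi>A \<psi>B k (- h) = cnj (chi \<psi>A \<psi>B k h)"
  using chi_diff[of k 0 h] by (simp add: chi_def addchar_0[OF A] addchar_0[OF B])

lemma chi_comm: "chi \<psi>A \<psi>B k g = chi \<psi>A \<psi>B g k"
  by (simp add: chi_def mult.commute)

lemma chi_zero: "chi \<psi>A \<psi>B 0 g = 1"
  by (simp add: chi_def addchar_0[OF A] addchar_0[OF B])

lemma chi_norm: "cmod (chi \<psi>A \<psi>B k g) = 1"
  by (simp add: chi_def norm_mult addchar_norm[OF A] addchar_norm[OF B])

lemma chi_orth:
  "(\<Sum>g\<in>UNIV. chi \<psi>A \<psi>B k g) = (if k = 0 then of_nat (CARD('a) * CARD('b)) else 0)"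
proof -
  have "(\<Sum>g\<in>UNIV. chi \<psi>A \<psi>B k g) = (\<Sum>u\<in>UNIV. \<psi>A (fst k * u)) * (\<Sum>w\<in>UNIV. \<psi>B (snd k * w))"
    by (simp only: sum_UNIV_prod chi_def fst_conv snd_conv sum_product)
  also have "\<dots> = (if k = 0 then of_nat (CARD('a) * CARD('b)) else 0)"
    by (cases k) (simp add: addchar_orth[OF A] addchar_orth[OF B] zero_prod_def)
  finally show ?thesis .
qed

lemma chi_inversion:
  "(\<Sum>k\<in>UNIV. (\<Sum>h\<in>UNIV. G h * chi \<psi>A \<psi>B k h) * cnj (chi \<psi>A \<psi>B k g))
     = of_nat (CARD('a) * CARD('b)) * G g"
proof -
  have "(\<Sum>k\<in>UNIV. (\<Sum>h\<in>UNIV. G h * chi \<psi>A \<psi>B k h) * cnj (chi \<psi>A \<psi>B k g))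
      = (\<Sum>k\<in>UNIV. \<Sum>h\<in>UNIV. G h * chi \<psi>A \<psi>B (h - g) k)"
  proof (intro sum.cong refl)
    fix k
    have "G h * chi \<psi>A \<psi>B k h * cnj (chi \<psi>A \<psi>B k g) = G h * chi \<psi>A \<psi>B (h - g) k" for h
      using chi_diff[of k h g] chi_comm[of k "h - g"] by (simp add: mult.assoc)
    hence *: "\<And>h. G h * chi \<psi>A \<psi>B k h * cnj (chi \<psi>A \<psi>B k g) = G h * chi \<psi>A \<psi>B (h - g) k" .
    have "(\<Sum>h\<in>UNIV. G h * chi \<psi>A \<psi>B k h) * cnj (chi \<psi>A \<psi>B k g) = (\<Sum>h\<in>UNIV. G h * chi \<psi>A \<psi>B k h * cnj (chi \<psi>A \<psi>B k g))"
      by (rule sum_distrib_right)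
    also have "\<dots> = (\<Sum>h\<in>UNIV. G h * chi \<psi>A \<psi>B (h - g) k)"
      using * by (intro sum.cong refl)
    finally show "(\<Sum>h\<in>UNIV. G h * chi \<psi>A \<psi>B k h) * cnj (chi \<psi>A \<psi>B k g) = (\<Sum>h\<in>UNIV. G h * chi \<psi>A \<psi>B (h - g) k)" .
  qed
  also have "\<dots> = (\<Sum>h\<in>UNIV. G h * (\<Sum>k\<in>UNIV. chi \<psi>A \<psi>B (h - g) k))"
    by (subst sum.swap) (simp add: sum_distrib_left)
  also have "\<dots> = (\<Sum>h\<in>UNIV. if h = g then G h * of_nat (CARD('a) * CARD('b)) else 0)"
    by (intro sum.cong refl) (simp add: chi_orth)
  also have "\<dots> = of_nat (CARD('a) * CARD('b)) * G g"
    by simp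
  finally show ?thesis .
qed

end



lemma graph_range: "graph_set F = range (\<lambda>x. (x, F x))"
  by (auto simp: graph_set_def)

lemma inj_graph: "inj (\<lambda>x. (x, F x))"
  by (auto intro: injI)

lemma diff_eq_iff3: "((g::'g::ab_group_add) - a = b - c) = (g = a + b - c)"
  by (auto simp: algebra_simps)

lemma Ncnt_eq:
  fixes F :: "'a::{field,finite} \<Rightarrow> 'b::{field,finite}"
  shows "Ncnt F g = (\<Sum>x\<in>UNIV. \<Sum>y\<in>UNIV. \<Sum>z\<in>UNIV.
            if g = (x, F x) + (y, F y) - (z, F z) then 1 else 0)"
proof -
  let ?P = "\<lambda>x. (x, F x)"
  have d: "delta (graph_set F) h = (\<Sum>y\<in>UNIV. \<Sum>z\<in>UNIV. if h = ?P y - ?P z then 1 else 0)" for h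
  proof -
    have "{(s, t). s \<in> graph_set F \<and> t \<in> graph_set F \<and> h = s - t}
        = (\<lambda>(y, z). (?P y, ?P z)) ` {(y, z). h = ?P y - ?P z}"
      by (auto simp: graph_set_def)
    moreover have "inj_on (\<lambda>(y, z). (?P y, ?P z)) {(y, z). h = ?P y - ?P z}"
      by (auto intro: inj_onI)
    ultimately have "delta (graph_set F) h = card {(y, z). h = ?P y - ?P z}"
      unfolding delta_def by (simp add: card_image)
    thus ?thesis by (simp add: card_pairs)
  qed
  have "Ncnt F g = (\<Sum>x\<in>UNIV. delta (graph_set F) (g - ?P x))"
    unfolding Ncnt_def graph_range by (simp add: sum.reindex[OF inj_graph])
  also have "\<dots> = (\<Sum>x\<in>UNIV. \<Sum>y\<in>UNIV. \<Sum>z\<in>UNIV. if g = ?P x + ?P y - ?P z then 1 else 0)"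
    by (simp only: d diff_eq_iff3)
  finally show ?thesis .
qed

lemma mult_if01: "(if c then 1 else 0) * (w::complex) = (if c then w else 0)"
  by simp

lemma of_nat_if01: "(of_nat (if c then 1 else 0) :: complex) = (if c then 1 else 0)"
  by simp

lemma Ncnt_sum:
  fixes F :: "'a::{field,finite} \<Rightarrow> 'b::{field,finite}" and f :: "'a \<times> 'b \<Rightarrow> complex"
  shows "(\<Sum>g\<in>UNIV. of_nat (Ncnt F g) * f g)
     = (\<Sum>x\<in>UNIV. \<Sum>y\<in>UNIV. \<Sum>z\<in>UNIV. f ((x, F x) + (y, F y) - (z, F z)))"
proof -
  let ?Q = "\<lambda>x y z. (x, F x) + (y, F y) - (z, F z)"
  have "(\<Sum>g\<in>UNIV. of_nat (Ncnt F g) * f g)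
      = (\<Sum>g\<in>UNIV. \<Sum>x\<in>UNIV. \<Sum>y\<in>UNIV. \<Sum>z\<in>UNIV. if g = ?Q x y z then f g else 0)"
    unfolding Ncnt_eq of_nat_sum of_nat_if01 sum_distrib_right mult_if01 by (rule refl)
  also have "\<dots> = (\<Sum>x\<in>UNIV. \<Sum>g\<in>UNIV. \<Sum>y\<in>UNIV. \<Sum>z\<in>UNIV. if g = ?Q x y z then f g else 0)"
    by (rule sum.swap)
  also have "\<dots> = (\<Sum>x\<in>UNIV. \<Sum>y\<in>UNIV. \<Sum>g\<in>UNIV. \<Sum>z\<in>UNIV. if g = ?Q x y z then f g else 0)"
    by (rule sum.cong[OF refl], rule sum.swap)
  also have "\<dots> = (\<Sum>x\<in>UNIV. \<Sum>y\<in>UNIV. \<Sum>z\<in>UNIV. \<Sum>g\<in>UNIV. if g = ?Q x y z then f g else 0)"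
    by (rule sum.cong[OF refl], rule sum.cong[OF refl], rule sum.swap)
  also have "\<dots> = (\<Sum>x\<in>UNIV. \<Sum>y\<in>UNIV. \<Sum>z\<in>UNIV. f (?Q x y z))"
    by (simp add: sum.delta')
  finally show ?thesis .
qed

context
  fixes \<psi>A :: "'a::{field,finite} \<Rightarrow> complex" and \<psi>B :: "'b::{field,finite} \<Rightarrow> complex"
    and F :: "'a \<Rightarrow> 'b"
  assumes A: "addchar \<psi>A" and B: "addchar \<psi>B"
begin

lemma T_eq:
  "(\<Sum>g\<in>UNIV. of_nat (Ncnt F g) * chi \<psi>A \<psi>B k g)
     = Shat \<psi>A \<psi>B F k * Shat \<psi>A \<psi>B F k * cnj (Shat \<psi>A \<psi>B F k)"
proof -
  have e: "chi \<psi>A \<psi>B k ((x, F x) + (y, F y) - (z, F z))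
     = chi \<psi>A \<psi>B k (x, F x) * chi \<psi>A \<psi>B k (y, F y) * cnj (chi \<psi>A \<psi>B k (z, F z))" for x y z
    by (simp only: chi_add[OF A B] chi_diff[OF A B])
  let ?a = "\<lambda>x. chi \<psi>A \<psi>B k (x, F x)"
  have "Shat \<psi>A \<psi>B F k * Shat \<psi>A \<psi>B F k * cnj (Shat \<psi>A \<psi>B F k)
      = (\<Sum>x\<in>UNIV. ?a x) * ((\<Sum>y\<in>UNIV. ?a y) * (\<Sum>z\<in>UNIV. cnj (?a z)))"
    by (simp add: Shat_def cnj_sum mult.assoc)
  also have "\<dots> = (\<Sum>x\<in>UNIV. \<Sum>y\<in>UNIV. ?a x * (\<Sum>z\<in>UNIV. ?a y * cnj (?a z)))"
    by (simp only: sum_product)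
  also have "\<dots> = (\<Sum>x\<in>UNIV. \<Sum>y\<in>UNIV. \<Sum>z\<in>UNIV. ?a x * (?a y * cnj (?a z)))"
    by (simp only: sum_distrib_left)
  finally show ?thesis
    unfolding Ncnt_sum e by (simp add: mult.assoc)
qed

lemma Shat_ind:
  "Shat \<psi>A \<psi>B F k = (\<Sum>h\<in>UNIV. (if h \<in> graph_set F then 1 else 0) * chi \<psi>A \<psi>B k h)"
proof -
  have "(\<Sum>h\<in>UNIV. (if h \<in> graph_set F then 1 else 0) * chi \<psi>A \<psi>B k h)
      = (\<Sum>h\<in>graph_set F. chi \<psi>A \<psi>B k h)"
  proof -
    have "(\<Sum>h\<in>UNIV. if h \<in> graph_set F then chi \<psi>A \<psi>B k h else 0) = sum (chi \<psi>A \<psi>B k) {h\<in>UNIV. h \<in> graph_set F}"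
      by (rule sum.inter_filter[symmetric]) simp
    thus ?thesis unfolding mult_if01 by simp
  qed
  also have "\<dots> = Shat \<psi>A \<psi>B F k"
    unfolding graph_range Shat_def by (simp add: sum.reindex[OF inj_graph])
  finally show ?thesis ..
qed

lemma Shat_b0:
  "Shat \<psi>A \<psi>B F (a, 0) = (if a = 0 then of_nat CARD('a) else 0)"
  by (simp add: Shat_def chi_def addchar_0[OF B] addchar_orth[OF A])

lemma Shat_zero: "Shat \<psi>A \<psi>B F 0 = of_nat CARD('a)"
  using Shat_b0[of 0] by (simp add: zero_prod_def)

lemma parseval:
  assumes "b \<noteq> 0"
  shows "(\<Sum>a\<in>UNIV. Shat \<psi>A \<psi>B F (a, b) * cnj (Shat \<psi>A \<psi>B F (a, b))) = of_nat CARD('a) ^ 2"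
proof -
  have "Shat \<psi>A \<psi>B F (a, b) * cnj (Shat \<psi>A \<psi>B F (a, b))
      = (\<Sum>x\<in>UNIV. \<Sum>y\<in>UNIV. \<psi>B (b * (F x - F y)) * \<psi>A ((x - y) * a))" for a
  proof -
    have "Shat \<psi>A \<psi>B F (a, b) * cnj (Shat \<psi>A \<psi>B F (a, b))
        = (\<Sum>x\<in>UNIV. \<Sum>y\<in>UNIV. chi \<psi>A \<psi>B (a, b) (x, F x) * cnj (chi \<psi>A \<psi>B (a, b) (y, F y)))"
      by (simp add: Shat_def cnj_sum sum_product)
    also have "\<dots> = (\<Sum>x\<in>UNIV. \<Sum>y\<in>UNIV. chi \<psi>A \<psi>B (a, b) ((x, F x) - (y, F y)))"
      by (simp only: chi_diff[OF A B])
    also have "\<dots> = (\<Sum>x\<in>UNIV. \<Sum>y\<in>UNIV. \<psi>B (b * (F x - F y)) * \<psi>A ((x - y) * a))"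
      by (simp add: chi_def mult.commute)
    finally show ?thesis .
  qed
  hence "(\<Sum>a\<in>UNIV. Shat \<psi>A \<psi>B F (a, b) * cnj (Shat \<psi>A \<psi>B F (a, b)))
      = (\<Sum>a\<in>UNIV. \<Sum>x\<in>UNIV. \<Sum>y\<in>UNIV. \<psi>B (b * (F x - F y)) * \<psi>A ((x - y) * a))"
    by simp
  also have "\<dots> = (\<Sum>x\<in>UNIV. \<Sum>a\<in>UNIV. \<Sum>y\<in>UNIV. \<psi>B (b * (F x - F y)) * \<psi>A ((x - y) * a))"
    by (rule sum.swap)
  also have "\<dots> = (\<Sum>x\<in>UNIV. \<Sum>y\<in>UNIV. \<Sum>a\<in>UNIV. \<psi>B (b * (F x - F y)) * \<psi>A ((x - y) * a))"
    by (rule sum.cong[OF refl], rule sum.swap)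
  also have "\<dots> = (\<Sum>x\<in>UNIV. \<Sum>y\<in>UNIV. \<psi>B (b * (F x - F y)) * (\<Sum>a\<in>UNIV. \<psi>A ((x - y) * a)))"
    by (simp add: sum_distrib_left)
  also have "\<dots> = (\<Sum>x\<in>(UNIV::'a set). \<Sum>y\<in>(UNIV::'a set). if y = x then of_nat CARD('a) else 0)"
    by (rule sum.cong[OF refl], rule sum.cong[OF refl]) (auto simp: addchar_orth[OF A] addchar_0[OF B])
  also have "\<dots> = of_nat CARD('a) ^ 2"
    by (simp add: power2_eq_square)
  finally show ?thesis .
qed

end



lemma cube_cmod:
  fixes z :: complex
  assumes "z * z * cnj z = of_real \<theta> * z"
  shows "cmod z = 0 \<or> cmod z = sqrt \<theta>"
proof (cases "z = 0")
  case True thus ?thesis by simp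
next
  case False
  have "z * (z * cnj z) = z * of_real \<theta>" using assms by (simp add: mult.assoc mult.commute)
  hence "z * cnj z = of_real \<theta>" using False by simp
  hence "complex_of_real ((cmod z)\<^sup>2) = of_real \<theta>" by (simp only: complex_norm_square)
  hence "(cmod z)\<^sup>2 = \<theta>" by (simp only: of_real_eq_iff)
  hence "sqrt \<theta> = cmod z" by (intro real_sqrt_unique) auto
  thus ?thesis by simp
qed

context
  fixes \<psi>A :: "'a::{field,finite} \<Rightarrow> complex" and \<psi>B :: "'b::{field,finite} \<Rightarrow> complex"
    and F :: "'a \<Rightarrow> 'b"
  assumes A: "addchar \<psi>A" and B: "addchar \<psi>B"
begin

lemma dir1:
  assumes hN: "\<forall>g. (of_nat (Ncnt F g)::complex) = of_real \<alpha> + of_real \<theta> * (if g \<in> graph_set F then 1 else 0)"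
  shows "Shat \<psi>A \<psi>B F k * Shat \<psi>A \<psi>B F k * cnj (Shat \<psi>A \<psi>B F k)
     = (if k = 0 then of_real \<alpha> * of_nat (CARD('a) * CARD('b)) else 0) + of_real \<theta> * Shat \<psi>A \<psi>B F k"
proof -
  have "Shat \<psi>A \<psi>B F k * Shat \<psi>A \<psi>B F k * cnj (Shat \<psi>A \<psi>B F k)
      = (\<Sum>g\<in>UNIV. of_nat (Ncnt F g) * chi \<psi>A \<psi>B k g)"
    by (rule T_eq[OF A B, symmetric])
  also have "\<dots> = (\<Sum>g\<in>UNIV. of_real \<alpha> * chi \<psi>A \<psi>B k g
       + of_real \<theta> * ((if g \<in> graph_set F then 1 else 0) * chi \<psi>A \<psi>B k g))"
    by (rule sum.cong[OF refl]) (simp only: hN distrib_right mult.assoc)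
  also have "\<dots> = of_real \<alpha> * (\<Sum>g\<in>UNIV. chi \<psi>A \<psi>B k g)
       + of_real \<theta> * (\<Sum>g\<in>UNIV. (if g \<in> graph_set F then 1 else 0) * chi \<psi>A \<psi>B k g)"
    by (simp only: sum.distrib sum_distrib_left)
  also have "\<dots> = (if k = 0 then of_real \<alpha> * of_nat (CARD('a) * CARD('b)) else 0) + of_real \<theta> * Shat \<psi>A \<psi>B F k"
    by (simp only: chi_orth[OF A B] Shat_ind[OF A B, symmetric]) simp
  finally show ?thesis .
qed

lemma dir1_walsh:
  assumes hN: "\<forall>g. (of_nat (Ncnt F g)::complex) = of_real \<alpha> + of_real \<theta> * (if g \<in> graph_set F then 1 else 0)"
    and "b \<noteq> 0"
  shows "cmod (Shat \<psi>A \<psi>B F (a, b)) = 0 \<or> cmod (Shat \<psi>A \<psi>B F (a, b)) = sqrt \<theta>"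
proof (rule cube_cmod)
  have "(a, b) \<noteq> 0" using assms(2) by (simp add: zero_prod_def)
  thus "Shat \<psi>A \<psi>B F (a, b) * Shat \<psi>A \<psi>B F (a, b) * cnj (Shat \<psi>A \<psi>B F (a, b)) = of_real \<theta> * Shat \<psi>A \<psi>B F (a, b)"
    using dir1[OF hN, of "(a, b)"] by simp
qed

lemma dir2:
  assumes th: "\<theta> \<ge> 0"
    and hW: "\<forall>a b. b \<noteq> 0 \<longrightarrow> cmod (Shat \<psi>A \<psi>B F (a, b)) = 0 \<or> cmod (Shat \<psi>A \<psi>B F (a, b)) = sqrt \<theta>"
  shows "(of_nat (CARD('a) * CARD('b)) :: complex) * of_nat (Ncnt F g)
     = of_real \<theta> * of_nat (CARD('a) * CARD('b)) * (if g \<in> graph_set F then 1 else 0)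
       + (of_nat CARD('a) ^ 3 - of_real \<theta> * of_nat CARD('a))"
proof -
  define c :: complex where "c = of_nat CARD('a) ^ 3 - of_real \<theta> * of_nat CARD('a)"
  have Tk: "Shat \<psi>A \<psi>B F k * Shat \<psi>A \<psi>B F k * cnj (Shat \<psi>A \<psi>B F k)
      = of_real \<theta> * Shat \<psi>A \<psi>B F k + (if k = 0 then c else 0)" for k
  proof (cases k)
    case (Pair a b)
    show ?thesis
    proof (cases "b = 0")
      case True
      show ?thesis
        using True Pair by (cases "a = 0") (simp_all add: Shat_b0[OF A B] zero_prod_def c_def power3_eq_cube)
    next
      case False
      have k0: "k \<noteq> 0" using False Pair by (simp add: zero_prod_def)
      from hW False have "cmod (Shat \<psi>A \<psi>B F k) = 0 \<or> cmod (Shat \<psi>A \<psi>B F k) = sqrt \<theta>"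
        using Pair by blast
      thus ?thesis
      proof
        assume "cmod (Shat \<psi>A \<psi>B F k) = 0"
        thus ?thesis using k0 by simp
      next
        assume h: "cmod (Shat \<psi>A \<psi>B F k) = sqrt \<theta>"
        have "Shat \<psi>A \<psi>B F k * cnj (Shat \<psi>A \<psi>B F k) = complex_of_real ((cmod (Shat \<psi>A \<psi>B F k))\<^sup>2)"
          by (rule complex_norm_square[symmetric])
        also have "\<dots> = of_real \<theta>" using h th by simp
        finally show ?thesis using k0 by (simp add: mult.assoc mult.commute)
      qed
    qed
  qed
  let ?V = "of_nat (CARD('a) * CARD('b)) :: complex"
  let ?I = "\<lambda>h. if h \<in> graph_set F then 1 else 0 :: complex"
  have "?V * of_nat (Ncnt F g)
      = (\<Sum>k\<in>UNIV. (\<Sum>h\<in>UNIV. of_nat (Ncnt F h) * chi \<psi>A \<psi>B k h) * cnj (chi \<psi>A \<psi>B k g))"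
    by (rule chi_inversion[OF A B, symmetric])
  also have "\<dots> = (\<Sum>k\<in>UNIV. (of_real \<theta> * Shat \<psi>A \<psi>B F k + (if k = 0 then c else 0)) * cnj (chi \<psi>A \<psi>B k g))"
    by (simp only: T_eq[OF A B] Tk)
  also have "\<dots> = of_real \<theta> * (\<Sum>k\<in>UNIV. Shat \<psi>A \<psi>B F k * cnj (chi \<psi>A \<psi>B k g))
       + (\<Sum>k\<in>UNIV. if k = 0 then c * cnj (chi \<psi>A \<psi>B k g) else 0)"
  proof -
    have "(of_real \<theta> * Shat \<psi>A \<psi>B F k + (if k = 0 then c else 0)) * cnj (chi \<psi>A \<psi>B k g)
        = of_real \<theta> * (Shat \<psi>A \<psi>B F k * cnj (chi \<psi>A \<psi>B k g)) + (if k = 0 then c * cnj (chi \<psi>A \<psi>B k g) else 0)" for k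
      by (simp add: distrib_right mult.assoc)
    thus ?thesis by (simp only: sum.distrib sum_distrib_left)
  qed
  also have "(\<Sum>k\<in>UNIV. if k = 0 then c * cnj (chi \<psi>A \<psi>B k g) else 0) = c"
    by (simp add: chi_zero[OF A B])
  also have "(\<Sum>k\<in>UNIV. Shat \<psi>A \<psi>B F k * cnj (chi \<psi>A \<psi>B k g))
      = (\<Sum>k\<in>UNIV. (\<Sum>h\<in>UNIV. ?I h * chi \<psi>A \<psi>B k h) * cnj (chi \<psi>A \<psi>B k g))"
    by (simp only: Shat_ind[OF A B])
  also have "\<dots> = ?V * ?I g"
    by (rule chi_inversion[OF A B])
  finally show ?thesis unfolding c_def by (simp only: mult.assoc)
qed

end



lemma card_UNIV_pair: "card (UNIV :: ('a::finite \<times> 'b::finite) set) = CARD('a) * CARD('b)"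
  by (simp only: UNIV_Times_UNIV[symmetric] card_cartesian_product)

lemma pgds_graph_iff:
  fixes F :: "'a::{field,finite} \<Rightarrow> 'b::{field,finite}"
  assumes "prime p" "CARD('a) = p ^ n" "CARD('b) = p ^ m" "m > 0" "p ^ n > 2"
  shows "pgds (graph_set F) (p ^ (n + m)) (p ^ n) \<alpha> \<beta> \<longleftrightarrow> (\<forall>g. Ncnt F g = (if g \<in> graph_set F then \<beta> else \<alpha>))"
proof -
  have p1: "p > 1" using assms(1) prime_gt_1_nat by blast
  have c1: "card (UNIV :: ('a \<times> 'b) set) = p ^ (n + m)" using assms(2,3) by (simp add: card_UNIV_pair power_add)
  have c2: "card (graph_set F) = p ^ n" unfolding graph_range using assms(2) by (simp add: card_image[OF inj_graph])
  have c3: "p ^ n < p ^ (n + m)" using p1 assms(4) by (intro power_strict_increasing) auto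
  show ?thesis unfolding pgds_def Ncnt_def using c1 c2 c3 assms(5) by auto
qed

lemma walsh_Shat:
  fixes F :: "'a::{field,finite} \<Rightarrow> 'b::{field,finite}"
  assumes "prime p" "CARD('a) = p ^ n" "n > 0"
  shows "walsh p n m F b a = Shat (chr p n) (chr p m) F (-a, b)"
  unfolding walsh_def Shat_def
proof (rule sum.cong[OF refl])
  fix x
  have A: "addchar (chr p n :: 'a \<Rightarrow> complex)" by (rule chr_addchar[OF assms])
  have z0: "zeta p \<noteq> 0" using norm_zeta_pow[of p 1] by auto
  have inv: "chr p n (a * x) * chr p n (- (a * x)) = 1"
    using addchar_inv[OF A, of "a * x"] by (simp add: mult.commute)
  have h: "inverse (chr p n (a * x)) = chr p n (- (a * x))" by (rule inverse_unique[OF inv])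
  have "zeta p powi (int (fp_val p (abs_trace p m (b * F x))) - int (fp_val p (abs_trace p n (a * x))))
      = chr p m (b * F x) / chr p n (a * x)"
    using z0 by (simp add: power_int_diff chr_def)
  also have "\<dots> = chi (chr p n) (chr p m) (-a, b) (x, F x)"
    by (simp add: chi_def divide_inverse h mult.commute)
  finally show "zeta p powi (int (fp_val p (abs_trace p m (b * F x))) - int (fp_val p (abs_trace p n (a * x))))
      = chi (chr p n) (chr p m) (-a, b) (x, F x)" .
qed

lemma powi_nat_diff: "(x::real) \<noteq> 0 \<Longrightarrow> x powi (int a - int b) = x ^ a / x ^ b"
  by (simp add: power_int_diff)

theorem mainTheorem1:
  fixes F :: "'a::{field,finite} \<Rightarrow> 'b::{field,finite}"
    and p n m :: nat and \<theta> :: real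
  assumes "prime p" and "n > 0" and "m > 0"
    and "CARD('a) = p ^ n" and "CARD('b) = p ^ m"
    and "\<theta> > 0"
    and "p ^ n > 2"
  shows "((\<exists>\<alpha> \<beta>. pgds (graph_set F) (p ^ (n + m)) (p ^ n) \<alpha> \<beta> \<and> real \<beta> - real \<alpha> = \<theta>)
          \<longleftrightarrow> (\<forall>b::'b. b \<noteq> 0 \<longrightarrow> (\<forall>a::'a. cmod (walsh p n m F b a) \<in> {0, sqrt \<theta>})))
       \<and> (\<forall>\<alpha> \<beta>. pgds (graph_set F) (p ^ (n + m)) (p ^ n) \<alpha> \<beta> \<and> real \<beta> - real \<alpha> = \<theta> \<longrightarrow>
            (\<exists>s::nat. s \<le> n \<and> \<theta> = real p ^ (n + s) \<and>
               real \<alpha> = real p powi (2 * int n - int m) - real p powi (int n + int s - int m) \<and>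
               real \<beta> = real p ^ (n + s) + real p powi (2 * int n - int m) - real p powi (int n + int s - int m)))"
proof -
  define \<psi>A where "\<psi>A = (chr p n :: 'a \<Rightarrow> complex)"
  define \<psi>B where "\<psi>B = (chr p m :: 'b \<Rightarrow> complex)"
  have A: "addchar \<psi>A" unfolding \<psi>A_def by (rule chr_addchar) (use assms in auto)
  have B: "addchar \<psi>B" unfolding \<psi>B_def by (rule chr_addchar) (use assms in auto)
  have W: "walsh p n m F b a = Shat \<psi>A \<psi>B F (-a, b)" for b a
    unfolding \<psi>A_def \<psi>B_def by (rule walsh_Shat) (use assms in auto)
  have PG: "pgds (graph_set F) (p ^ (n + m)) (p ^ n) \<alpha> \<beta> \<longleftrightarrow> (\<forall>g. Ncnt F g = (if g \<in> graph_set F then \<beta> else \<alpha>))" for \<alpha> \<beta>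
    by (rule pgds_graph_iff) (use assms in auto)
  have p1: "p > 1" using assms(1) prime_gt_1_nat by blast
  define V where "V = CARD('a) * CARD('b)"
  have Vpos: "V > 0" unfolding V_def by simp

  have HN: "\<forall>g. (of_nat (Ncnt F g)::complex) = of_real (real \<alpha>) + of_real \<theta> * (if g \<in> graph_set F then 1 else 0)"
    if "pgds (graph_set F) (p ^ (n + m)) (p ^ n) \<alpha> \<beta>" "real \<beta> - real \<alpha> = \<theta>" for \<alpha> \<beta>
  proof
    fix g
    have N: "Ncnt F g = (if g \<in> graph_set F then \<beta> else \<alpha>)" using that(1) PG by blast
    have e: "real \<beta> = real \<alpha> + \<theta>" using that(2) by simp
    have "(of_nat \<beta> :: complex) = of_real (real \<beta>)" by simp
    also have "\<dots> = of_real (real \<alpha> + \<theta>)" by (simp only: e)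
    also have "\<dots> = of_nat \<alpha> + of_real \<theta>" by simp
    finally have "(of_nat \<beta> :: complex) = of_nat \<alpha> + of_real \<theta>" .
    thus "(of_nat (Ncnt F g)::complex) = of_real (real \<alpha>) + of_real \<theta> * (if g \<in> graph_set F then 1 else 0)"
      using N by simp
  qed

  have part1: "(\<exists>\<alpha> \<beta>. pgds (graph_set F) (p ^ (n + m)) (p ^ n) \<alpha> \<beta> \<and> real \<beta> - real \<alpha> = \<theta>)
          \<longleftrightarrow> (\<forall>b::'b. b \<noteq> 0 \<longrightarrow> (\<forall>a::'a. cmod (walsh p n m F b a) \<in> {0, sqrt \<theta>}))"
  proof
    assume "\<exists>\<alpha> \<beta>. pgds (graph_set F) (p ^ (n + m)) (p ^ n) \<alpha> \<beta> \<and> real \<beta> - real \<alpha> = \<theta>"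
    then obtain \<alpha> \<beta> where ab: "pgds (graph_set F) (p ^ (n + m)) (p ^ n) \<alpha> \<beta>" "real \<beta> - real \<alpha> = \<theta>" by blast
    show "\<forall>b::'b. b \<noteq> 0 \<longrightarrow> (\<forall>a::'a. cmod (walsh p n m F b a) \<in> {0, sqrt \<theta>})"
      using dir1_walsh[OF A B HN[OF ab]] by (auto simp: W)
  next
    assume H: "\<forall>b::'b. b \<noteq> 0 \<longrightarrow> (\<forall>a::'a. cmod (walsh p n m F b a) \<in> {0, sqrt \<theta>})"
    have hW: "\<forall>a b. b \<noteq> 0 \<longrightarrow> cmod (Shat \<psi>A \<psi>B F (a, b)) = 0 \<or> cmod (Shat \<psi>A \<psi>B F (a, b)) = sqrt \<theta>"
    proof (intro allI impI)
      fix a :: 'a and b :: 'b assume "b \<noteq> 0"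
      hence "cmod (walsh p n m F b (-a)) \<in> {0, sqrt \<theta>}" using H by blast
      thus "cmod (Shat \<psi>A \<psi>B F (a, b)) = 0 \<or> cmod (Shat \<psi>A \<psi>B F (a, b)) = sqrt \<theta>" by (simp add: W)
    qed
    define c :: complex where "c = of_nat CARD('a) ^ 3 - of_real \<theta> * of_nat CARD('a)"
    have D: "(of_nat V :: complex) * of_nat (Ncnt F g) = of_real \<theta> * of_nat V * (if g \<in> graph_set F then 1 else 0) + c" for g
      unfolding V_def c_def by (rule dir2[OF A B]) (use assms(6) hW in auto)
    define g0 where "g0 = ((0::'a), F 0 + 1)"
    define g1 where "g1 = ((0::'a), F 0)"
    have g0: "g0 \<notin> graph_set F" by (auto simp: g0_def graph_set_def)
    have g1: "g1 \<in> graph_set F" by (auto simp: g1_def graph_set_def)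
    define \<alpha> where "\<alpha> = Ncnt F g0"
    define \<beta> where "\<beta> = Ncnt F g1"
    have V0: "(of_nat V :: complex) \<noteq> 0" using Vpos by simp
    have Na: "Ncnt F g = \<alpha>" if "g \<notin> graph_set F" for g
    proof -
      have "(of_nat V :: complex) * of_nat (Ncnt F g) = of_nat V * of_nat \<alpha>"
        using D[of g] D[of g0] that g0 by (simp add: \<alpha>_def)
      hence "(of_nat (Ncnt F g) :: complex) = of_nat \<alpha>" using V0 by simp
      thus ?thesis by (simp only: of_nat_eq_iff)
    qed
    have Nb: "Ncnt F g = \<beta>" if "g \<in> graph_set F" for g
    proof -
      have "(of_nat V :: complex) * of_nat (Ncnt F g) = of_nat V * of_nat \<beta>"
        using D[of g] D[of g1] that g1 by (simp add: \<beta>_def)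
      hence "(of_nat (Ncnt F g) :: complex) = of_nat \<beta>" using V0 by simp
      thus ?thesis by (simp only: of_nat_eq_iff)
    qed
    have "pgds (graph_set F) (p ^ (n + m)) (p ^ n) \<alpha> \<beta>"
      unfolding PG using Na Nb by auto
    moreover have "real \<beta> - real \<alpha> = \<theta>"
    proof -
      have "(of_nat V :: complex) * (of_nat \<beta> - of_nat \<alpha>) = of_nat V * of_real \<theta>"
        using D[of g1] D[of g0] g0 g1 by (simp add: \<alpha>_def \<beta>_def algebra_simps)
      hence "(of_nat \<beta> - of_nat \<alpha> :: complex) = of_real \<theta>" using V0 by simp
      hence "complex_of_real (real \<beta> - real \<alpha>) = complex_of_real \<theta>" by simp
      thus ?thesis by (simp only: of_real_eq_iff)
    qed
    ultimately show "\<exists>\<alpha> \<beta>. pgds (graph_set F) (p ^ (n + m)) (p ^ n) \<alpha> \<beta> \<and> real \<beta> - real \<alpha> = \<theta>" by blast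
  qed

  have part2: "\<exists>s::nat. s \<le> n \<and> \<theta> = real p ^ (n + s) \<and>
               real \<alpha> = real p powi (2 * int n - int m) - real p powi (int n + int s - int m) \<and>
               real \<beta> = real p ^ (n + s) + real p powi (2 * int n - int m) - real p powi (int n + int s - int m)"
    if ab: "pgds (graph_set F) (p ^ (n + m)) (p ^ n) \<alpha> \<beta>" "real \<beta> - real \<alpha> = \<theta>" for \<alpha> \<beta>
  proof -
    note hN = HN[OF ab]
    have cube: "real (p ^ n) ^ 3 = real \<alpha> * real V + \<theta> * real (p ^ n)"
    proof -
      have "Shat \<psi>A \<psi>B F 0 * Shat \<psi>A \<psi>B F 0 * cnj (Shat \<psi>A \<psi>B F 0)
          = of_real (real \<alpha>) * of_nat V + of_real \<theta> * Shat \<psi>A \<psi>B F 0"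
        using dir1[OF A B hN, of 0] by (simp add: V_def)
      hence "(of_nat (p ^ n) :: complex) * of_nat (p ^ n) * of_nat (p ^ n)
          = of_real (real \<alpha>) * of_nat V + of_real \<theta> * of_nat (p ^ n)"
        using Shat_zero[OF A B, of F] assms(4) by simp
      hence "complex_of_real (real (p ^ n) ^ 3) = complex_of_real (real \<alpha> * real V + \<theta> * real (p ^ n))"
        by (simp add: power3_eq_cube)
      thus ?thesis by (simp only: of_real_eq_iff)
    qed
    define C where "C = {a::'a. cmod (Shat \<psi>A \<psi>B F (a, 1)) = sqrt \<theta>}"
    have sq: "sqrt \<theta> \<noteq> 0" using assms(6) by simp
    have sq2: "(complex_of_real (sqrt \<theta>))\<^sup>2 = complex_of_real \<theta>"
      using assms(6) by (simp flip: of_real_power)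
    have "(\<Sum>a\<in>UNIV. Shat \<psi>A \<psi>B F (a, 1) * cnj (Shat \<psi>A \<psi>B F (a, 1))) = of_nat CARD('a) ^ 2"
      by (rule parseval[OF A B]) simp
    moreover have "(\<Sum>a\<in>UNIV. Shat \<psi>A \<psi>B F (a, 1) * cnj (Shat \<psi>A \<psi>B F (a, 1)))
        = (\<Sum>a\<in>UNIV. complex_of_real (if a \<in> C then \<theta> else 0))"
    proof (rule sum.cong[OF refl])
      fix a :: 'a
      have "cmod (Shat \<psi>A \<psi>B F (a, 1)) = 0 \<or> cmod (Shat \<psi>A \<psi>B F (a, 1)) = sqrt \<theta>"
        by (rule dir1_walsh[OF A B hN]) simp
      moreover have "Shat \<psi>A \<psi>B F (a, 1) * cnj (Shat \<psi>A \<psi>B F (a, 1)) = complex_of_real ((cmod (Shat \<psi>A \<psi>B F (a, 1)))\<^sup>2)"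
        by (rule complex_norm_square[symmetric])
      ultimately show "Shat \<psi>A \<psi>B F (a, 1) * cnj (Shat \<psi>A \<psi>B F (a, 1)) = complex_of_real (if a \<in> C then \<theta> else 0)"
        using sq sq2 assms(6) by (auto simp: C_def)
    qed
    moreover have "(\<Sum>a\<in>UNIV. complex_of_real (if a \<in> C then \<theta> else 0)) = of_nat (card C) * of_real \<theta>"
    proof -
      have "(\<Sum>a\<in>UNIV. (if a \<in> C then \<theta> else 0)) = sum (\<lambda>_. \<theta>) {a\<in>UNIV. a \<in> C}"
        by (rule sum.inter_filter[symmetric]) simp
      hence "(\<Sum>a\<in>UNIV. (if a \<in> C then \<theta> else 0)) = real (card C) * \<theta>" by simp
      hence "complex_of_real (\<Sum>a\<in>UNIV. (if a \<in> C then \<theta> else 0)) = complex_of_real (real (card C) * \<theta>)" by (rule arg_cong)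
      thus ?thesis by (simp only: of_real_sum of_real_mult of_real_of_nat_eq)
    qed
    ultimately have "(of_nat (card C) :: complex) * of_real \<theta> = of_nat (p ^ n) ^ 2"
      using assms(4) by simp
    hence cth: "real (card C) * \<theta> = real (p ^ n) ^ 2"
      by (metis of_real_eq_iff of_real_mult of_real_of_nat_eq of_real_power)
    have "\<beta> > \<alpha>" using ab(2) assms(6) by simp
    define t where "t = \<beta> - \<alpha>"
    have tth: "\<theta> = real t" using ab(2) \<open>\<beta> > \<alpha>\<close> by (simp add: t_def of_nat_diff)
    have ct: "card C * t = p ^ (2 * n)"
    proof -
      have "real (card C * t) = real (p ^ (2 * n))" using cth tth by (simp add: power_mult power2_eq_square mult.commute)
      thus ?thesis by (simp only: of_nat_eq_iff)
    qed
    hence "t dvd p ^ (2 * n)" by (metis dvd_triv_right)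
    then obtain j where j: "j \<le> 2 * n" "t = p ^ j" using divides_primepow_nat[OF assms(1)] by blast
    have "card C * p ^ j = p ^ (2 * n - j) * p ^ j" using ct j by (simp flip: power_add)
    hence cC: "card C = p ^ (2 * n - j)" using p1 by simp
    have "card C \<le> CARD('a)" by (rule card_mono) auto
    hence "p ^ (2 * n - j) \<le> p ^ n" using cC assms(4) by simp
    hence "2 * n - j \<le> n" using p1 power_le_imp_le_exp by blast
    hence jn: "n \<le> j" by linarith
    define s where "s = j - n"
    have s1: "s \<le> n" using j(1) by (simp add: s_def)
    have s2: "n + s = j" using jn by (simp add: s_def)
    have th: "\<theta> = real p ^ (n + s)" using tth j(2) s2 by simp
    define X where "X = real p"
    have X0: "X > 0" using p1 by (simp add: X_def)
    have e1: "real p powi (2 * int n - int m) = X ^ (2 * n) / X ^ m"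
      using powi_nat_diff[of X "2 * n" m] X0 by (simp add: X_def)
    have e2: "real p powi (int n + int s - int m) = X ^ (n + s) / X ^ m"
      using powi_nat_diff[of X "n + s" m] X0 by (simp add: X_def)
    have H: "real \<alpha> * (X ^ n * X ^ m) = X ^ n * (X ^ (2 * n) - X ^ (n + s))"
      using cube th unfolding V_def X_def
      by (simp add: assms(4,5) power_add power_mult algebra_simps power3_eq_cube power2_eq_square)
    have "X ^ n * (real \<alpha> * X ^ m) = real \<alpha> * (X ^ n * X ^ m)" by (rule mult.left_commute)
    also note H
    finally have "X ^ n * (real \<alpha> * X ^ m) = X ^ n * (X ^ (2 * n) - X ^ (n + s))" .
    moreover have Xn: "X ^ n \<noteq> 0" using X0 by simp
    ultimately have am: "real \<alpha> * X ^ m = X ^ (2 * n) - X ^ (n + s)"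
      by (simp only: mult_left_cancel[OF Xn])
    have Xm: "X ^ m \<noteq> 0" using X0 by simp
    have "real \<alpha> = (X ^ (2 * n) - X ^ (n + s)) / X ^ m"
      using am Xm by (simp only: eq_divide_eq if_True not_False_eq_True simp_thms)
    also have "\<dots> = X ^ (2 * n) / X ^ m - X ^ (n + s) / X ^ m" by (rule diff_divide_distrib)
    finally have al: "real \<alpha> = real p powi (2 * int n - int m) - real p powi (int n + int s - int m)"
      unfolding e1 e2 .
    have be: "real \<beta> = real p ^ (n + s) + real p powi (2 * int n - int m) - real p powi (int n + int s - int m)"
      using al ab(2) th by linarith
    show ?thesis by (rule exI[of _ s], intro conjI; fact)
  qed
  show ?thesis
  proof (rule conjI)
    show "(\<exists>\<alpha> \<beta>. pgds (graph_set F) (p ^ (n + m)) (p ^ n) \<alpha> \<beta> \<and> real \<beta> - real \<alpha> = \<theta>)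
          \<longleftrightarrow> (\<forall>b::'b. b \<noteq> 0 \<longrightarrow> (\<forall>a::'a. cmod (walsh p n m F b a) \<in> {0, sqrt \<theta>}))"
      by (rule part1)
  next
    show "\<forall>\<alpha> \<beta>. pgds (graph_set F) (p ^ (n + m)) (p ^ n) \<alpha> \<beta> \<and> real \<beta> - real \<alpha> = \<theta> \<longrightarrow>
            (\<exists>s::nat. s \<le> n \<and> \<theta> = real p ^ (n + s) \<and>
               real \<alpha> = real p powi (2 * int n - int m) - real p powi (int n + int s - int m) \<and>
               real \<beta> = real p ^ (n + s) + real p powi (2 * int n - int m) - real p powi (int n + int s - int m))"
    proof (intro allI impI)
      fix \<alpha> \<beta> :: nat
      assume "pgds (graph_set F) (p ^ (n + m)) (p ^ n) \<alpha> \<beta> \<and> real \<beta> - real \<alpha> = \<theta>"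
      thus "\<exists>s::nat. s \<le> n \<and> \<theta> = real p ^ (n + s) \<and>
               real \<alpha> = real p powi (2 * int n - int m) - real p powi (int n + int s - int m) \<and>
               real \<beta> = real p ^ (n + s) + real p powi (2 * int n - int m) - real p powi (int n + int s - int m)"
        using part2 by blast
    qed
  qed
qed

end
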